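(* On $\mathbb R^4$ with coordinates $(q_1,p_1,q_2,p_2)$ and $\omega=dp_1\wedge dq_1+dp_2\wedge dq_2$, let $H=q_1q_2-p_1p_2$, $J=\tfrac12(q_1^2+p_1^2)-\tfrac12(q_2^2+p_2^2)$, let $B=\{q_1^2+q_2^2+p_1^2+p_2^2<2r\}$ for fixed $r>0$, and take the rotation 1-form $\vartheta=d\theta_1=\dfrac{p_1\,dq_1-q_1\,dp_1}{q_1^2+p_1^2}$ on $B\setminus\{q_1=p_1=0\}$. Let $\Gamma(s)=(j(s),h(s))=(\ell\cos s,\ell\sin s)$, $s\in[0,2\pi]$, with $\ell>0$ sufficiently small. Then $\operatorname{var}_\Gamma\Phi_{\mathrm{rel}}=2\pi$, and hence the monodromy number is $k=-1$.
   Context: $X_H,X_J$ are the Hamiltonian vector fields; the flow of $X_J$ is $2\pi$-periodic. For $(j,h)\neq(0,0)$ small, $F^{-1}(j,h)\cap\overline B$ is a cylinder whose boundary consists of two $X_J$-orbits $S_-,S_+$, with the flow of $X_H$ carrying $S_-$ to $S_+$. $\Phi_{\mathrm{rel}}(j,h)=\int\vartheta$ over the portion inside $B$ of an $X_H$-orbit in $F^{-1}(j,h)$, from $S_-$ to $S_+$ (independent of the orbit). Variation: for $g:\Gamma\to\mathbb R$ with finitely many jumps $d_j=\lim_{\varepsilon\to0^+}(g(p_j+\varepsilon)-g(p_j-\varepsilon))$ along increasing $s$, $\operatorname{var}_\Gamma g=-\sum_jd_j$. Monodromy number $k$ of the torus bundle over $\Gamma$ (for any integrable system that agrees with this local model near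 a focus-focus point with singly pinched compact fiber) is related by $\operatorname{var}_\Gamma\Phi_{\mathrm{rel}}=-2\pi k$. *)

theory Defs
  imports "HOL-Analysis.Analysis"
begin

text \<open>Points of R^4 are tuples (q1, p1, q2, p2).\<close>
type_synonym R4 = "real \<times> real \<times> real \<times> real"

text \<open>Hamiltonian vector field for omega = dp1 wedge dq1 + dp2 wedge dq2, with the
  convention (iota of X_f) omega = - df, i.e. q' = df/dp, p' = - df/dq.\<close>
definition ham_vf :: "(R4 \<Rightarrow> real) \<Rightarrow> R4 \<Rightarrow> R4" where
  "ham_vf f x = (case x of (q1, p1, q2, p2) \<Rightarrow>
     ( deriv (\<lambda>t. f (q1, t, q2, p2)) p1,
      - deriv (\<lambda>t. f (t, p1, q2, p2)) q1,
       deriv (\<lambda>t. f (q1, p1, q2, t)) p2,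
      - deriv (\<lambda>t. f (q1, p1, t, p2)) q2))"

definition H :: "R4 \<Rightarrow> real" where
  "H x = (case x of (q1, p1, q2, p2) \<Rightarrow> q1 * q2 - p1 * p2)"

definition J :: "R4 \<Rightarrow> real" where
  "J x = (case x of (q1, p1, q2, p2) \<Rightarrow> (q1\<^sup>2 + p1\<^sup>2) / 2 - (q2\<^sup>2 + p2\<^sup>2) / 2)"

definition F :: "R4 \<Rightarrow> real \<times> real" where
  "F x = (J x, H x)"

definition sqnorm4 :: "R4 \<Rightarrow> real" where
  "sqnorm4 x = (case x of (q1, p1, q2, p2) \<Rightarrow> q1\<^sup>2 + q2\<^sup>2 + p1\<^sup>2 + p2\<^sup>2)"

definition ballB :: "real \<Rightarrow> R4 set" where
  "ballB r = {x. sqnorm4 x < 2 * r}"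

definition theta :: "R4 \<Rightarrow> R4 \<Rightarrow> real" where
  "theta x v = (case x of (q1, p1, q2, p2) \<Rightarrow> case v of (vq1, vp1, vq2, vp2) \<Rightarrow>
     (p1 * vq1 - q1 * vp1) / (q1\<^sup>2 + p1\<^sup>2))"

definition XH_orbit :: "(real \<Rightarrow> R4) \<Rightarrow> bool" where
  "XH_orbit \<gamma> \<longleftrightarrow> (\<forall>t. (\<gamma> has_vector_derivative ham_vf H (\<gamma> t)) (at t))"

definition Phi_rel :: "real \<Rightarrow> real \<Rightarrow> real \<Rightarrow> real" where
  "Phi_rel r j h = (SOME c. \<exists>\<gamma> t0 t1.
      XH_orbit \<gamma> \<and> (\<forall>t. F (\<gamma> t) = (j, h)) \<and> t0 < t1 \<and>
      sqnorm4 (\<gamma> t0) = 2 * r \<and> sqnorm4 (\<gamma> t1) = 2 * r \<and>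
      (\<forall>t\<in>{t0<..<t1}. \<gamma> t \<in> ballB r) \<and>
      c = integral {t0..t1} (\<lambda>t. theta (\<gamma> t) (vector_derivative \<gamma> (at t))))"

definition Gamma :: "real \<Rightarrow> real \<Rightarrow> real \<times> real" where
  "Gamma l s = (l * cos s, l * sin s)"

definition jump :: "(real \<Rightarrow> real) \<Rightarrow> real \<Rightarrow> real" where
  "jump g p = Lim (at_right 0) (\<lambda>e. g (p + e) - g (p - e))"

text \<open>Jump points of a function g along the closed loop parametrised by s in [0, 2 pi)
  (g is 2pi-periodic, so discontinuity at 0 is the loop discontinuity).\<close>
definition jump_points :: "(real \<Rightarrow> real) \<Rightarrow> real set" where
  "jump_points g = {p \<in> {0..<2 * pi}. \<not> isCont g p}"

definition var_loop :: "(real \<Rightarrow> real) \<Rightarrow> real" where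
  "var_loop g = - (\<Sum>p\<in>jump_points g. jump g p)"

end

theory Submission
  imports Defs
begin

lemma ham_H: "ham_vf H (q1,p1,q2,p2) = (-p2,-q2,-p1,-q1)"
proof -
  have "deriv (\<lambda>t. q1 * q2 - t * p2) p1 = -p2"
    by (rule DERIV_imp_deriv) (auto intro!: derivative_eq_intros)
  moreover have "deriv (\<lambda>t. t * q2 - p1 * p2) q1 = q2"
    by (rule DERIV_imp_deriv) (auto intro!: derivative_eq_intros)
  moreover have "deriv (\<lambda>t. q1 * q2 - p1 * t) p2 = -p1"
    by (rule DERIV_imp_deriv) (auto intro!: derivative_eq_intros)
  moreover have "deriv (\<lambda>t. q1 * t - p1 * p2) q2 = q1"
    by (rule DERIV_imp_deriv) (auto intro!: derivative_eq_intros)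
  ultimately show ?thesis by (simp add: ham_vf_def H_def)
qed

lemma vd_fst: "(g has_vector_derivative v) FF \<Longrightarrow> ((\<lambda>t. fst (g t)) has_vector_derivative fst v) FF"
  unfolding has_vector_derivative_def
  by (drule has_derivative_fst) simp

lemma vd_snd: "(g has_vector_derivative v) FF \<Longrightarrow> ((\<lambda>t. snd (g t)) has_vector_derivative snd v) FF"
  unfolding has_vector_derivative_def
  by (drule has_derivative_snd) simp

lemma ham_H': "ham_vf H x = (- snd (snd (snd x)), - fst (snd (snd x)), - fst (snd x), - fst x)"
  using ham_H[of "fst x" "fst (snd x)" "fst (snd (snd x))" "snd (snd (snd x))"] by simp

lemma orbit_derivs:
  assumes "XH_orbit \<gamma>"
  shows "((\<lambda>t. fst (\<gamma> t)) has_real_derivative - snd (snd (snd (\<gamma> t)))) (at t)"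
    "((\<lambda>t. fst (snd (\<gamma> t))) has_real_derivative - fst (snd (snd (\<gamma> t)))) (at t)"
    "((\<lambda>t. fst (snd (snd (\<gamma> t)))) has_real_derivative - fst (snd (\<gamma> t))) (at t)"
    "((\<lambda>t. snd (snd (snd (\<gamma> t)))) has_real_derivative - fst (\<gamma> t)) (at t)"
    "vector_derivative \<gamma> (at t) = ham_vf H (\<gamma> t)"
proof -
  have d: "(\<gamma> has_vector_derivative ham_vf H (\<gamma> t)) (at t)"
    using assms by (simp add: XH_orbit_def)
  show "vector_derivative \<gamma> (at t) = ham_vf H (\<gamma> t)"
    using d by (rule vector_derivative_at)
  show "((\<lambda>t. fst (\<gamma> t)) has_real_derivative - snd (snd (snd (\<gamma> t)))) (at t)"
    using vd_fst[OF d] by (simp add: ham_H' has_real_derivative_iff_has_vector_derivative)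
  show "((\<lambda>t. fst (snd (\<gamma> t))) has_real_derivative - fst (snd (snd (\<gamma> t)))) (at t)"
    using vd_fst[OF vd_snd[OF d]] by (simp add: ham_H' has_real_derivative_iff_has_vector_derivative)
  show "((\<lambda>t. fst (snd (snd (\<gamma> t)))) has_real_derivative - fst (snd (\<gamma> t))) (at t)"
    using vd_fst[OF vd_snd[OF vd_snd[OF d]]] by (simp add: ham_H' has_real_derivative_iff_has_vector_derivative)
  show "((\<lambda>t. snd (snd (snd (\<gamma> t)))) has_real_derivative - fst (\<gamma> t)) (at t)"
    using vd_snd[OF vd_snd[OF vd_snd[OF d]]] by (simp add: ham_H' has_real_derivative_iff_has_vector_derivative)
qed

lemma ident1: "(q1::real)^2 + q2^2 + p1^2 + p2^2 = (((q1-p2)^2 + (p1-q2)^2) + ((q1+p2)^2 + (p1+q2)^2))/2"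
  by (simp add: power2_eq_square field_simps)

lemma ident2: "(((q1::real)-p2)^2 + (p1-q2)^2) * ((q1+p2)^2 + (p1+q2)^2)
   = 4 * (((q1^2+p1^2)/2 - (q2^2+p2^2)/2)^2 + (q1*q2 - p1*p2)^2)"
  by (simp add: power2_eq_square field_simps)

lemma ident3: "4 * (((q1::real)-p2)^2 + (p1-q2)^2) * (q1^2+p1^2)
   = ((((q1::real)-p2)^2 + (p1-q2)^2) + 2 * ((q1^2+p1^2)/2 - (q2^2+p2^2)/2))^2 + 4 * (q1*q2 - p1*p2)^2"
  by (simp add: power2_eq_square field_simps)


lemma aux: "h\<noteq>0 \<Longrightarrow> W>0 \<Longrightarrow> D>0 \<Longrightarrow> (2*W/(2*h)) / (4*W*D/(4*h^2)) = h/(D::real)"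
  by (simp add: field_simps power2_eq_square)

lemma integral_val:
  fixes \<gamma> :: "real \<Rightarrow> R4"
  assumes orb: "XH_orbit \<gamma>" and Fc: "\<forall>t. F (\<gamma> t) = (j,h)" and t01: "t0 < t1"
    and s0: "sqnorm4 (\<gamma> t0) = 2*r" and s1: "sqnorm4 (\<gamma> t1) = 2*r"
    and jh: "j^2+h^2 = l^2" and l: "0<l" "l<r"
  shows "integral {t0..t1} (\<lambda>t. theta (\<gamma> t) (vector_derivative \<gamma> (at t))) =
    (if h = 0 then 0 else arctan((2*r + 2* sqrt(r^2-l^2) + 2*j)/(2*h)) - arctan((2*r - 2* sqrt(r^2-l^2) + 2*j)/(2*h)))"
proof -
  define Q1 where "Q1 = (\<lambda>t. fst (\<gamma> t))"
  define P1 where "P1 = (\<lambda>t. fst (snd (\<gamma> t)))"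
  define Q2 where "Q2 = (\<lambda>t. fst (snd (snd (\<gamma> t))))"
  define P2 where "P2 = (\<lambda>t. snd (snd (snd (\<gamma> t))))"
  have gam: "\<gamma> t = (Q1 t, P1 t, Q2 t, P2 t)" for t by (simp add: Q1_def P1_def Q2_def P2_def)
  have dQ1: "(Q1 has_real_derivative - P2 t) (at t)" for t
    using orbit_derivs(1)[OF orb] by (simp add: Q1_def P2_def)
  have dP1: "(P1 has_real_derivative - Q2 t) (at t)" for t
    using orbit_derivs(2)[OF orb] by (simp add: P1_def Q2_def)
  have dQ2: "(Q2 has_real_derivative - P1 t) (at t)" for t
    using orbit_derivs(3)[OF orb] by (simp add: P1_def Q2_def)
  have dP2: "(P2 has_real_derivative - Q1 t) (at t)" for t
    using orbit_derivs(4)[OF orb] by (simp add: Q1_def P2_def)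
  have J_eq: "(Q1 t^2 + P1 t^2)/2 - (Q2 t^2+P2 t^2)/2 = j" for t
    using Fc[rule_format, of t] by (simp add: F_def J_def gam)
  have H_eq: "Q1 t * Q2 t - P1 t * P2 t = h" for t
    using Fc[rule_format, of t] by (simp add: F_def H_def gam)
  have integrand: "theta (\<gamma> t) (vector_derivative \<gamma> (at t)) = h / (Q1 t^2 + P1 t^2)" for t
  proof -
    have "vector_derivative \<gamma> (at t) = (- P2 t, - Q2 t, - P1 t, - Q1 t)"
      using orbit_derivs(5)[OF orb, of t] by (simp add: gam ham_H)
    then show ?thesis using H_eq[of t] by (simp add: theta_def gam)
  qed
  show ?thesis
  proof (cases "h = 0")
    case True
    then show ?thesis by (simp add: integrand)
  next
    case hne: False
    define W where "W = (\<lambda>t. (Q1 t - P2 t)^2 + (P1 t - Q2 t)^2)"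
    define Z where "Z = (\<lambda>t. (Q1 t + P2 t)^2 + (P1 t + Q2 t)^2)"
    have WZ: "W t * Z t = 4*l^2" for t
      using ident2[of "Q1 t" "P2 t" "P1 t" "Q2 t"] J_eq[of t] H_eq[of t] jh by (simp add: W_def Z_def)
    have Wpos: "W t > 0" for t
    proof -
      have "W t \<ge> 0" "Z t \<ge> 0" by (simp_all add: W_def Z_def)
      moreover have "W t * Z t > 0" using WZ[of t] l by simp
      ultimately show ?thesis by (metis less_eq_real_def mult_zero_left)
    qed
    have den: "4 * W t * (Q1 t^2 + P1 t^2) = (W t + 2*j)^2 + 4*h^2" for t
      using ident3[of "Q1 t" "P2 t" "P1 t" "Q2 t"] J_eq[of t] H_eq[of t] by (simp add: W_def)
    have denpos: "Q1 t^2 + P1 t^2 > 0" for t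
    proof -
      have "4 * W t * (Q1 t^2 + P1 t^2) > 0" using den[of t] hne
        by (metis add_nonneg_pos mult_pos_pos power2_less_0 zero_less_numeral zero_less_power2 not_less)
      then show ?thesis using Wpos[of t]
        by (simp add: zero_less_mult_iff)
    qed
    have dW: "(W has_real_derivative 2 * W t) (at t)" for t
    proof -
      have "(W has_real_derivative 2*(Q1 t - P2 t)*(-P2 t - -Q1 t) + 2*(P1 t - Q2 t)*(-Q2 t - -P1 t)) (at t)"
        unfolding W_def by (rule derivative_eq_intros dQ1 dP1 dQ2 dP2 refl | simp add: algebra_simps)+
      then show ?thesis by (simp add: W_def power2_eq_square) argo
    qed
    define \<Psi> where "\<Psi> = (\<lambda>t. arctan ((W t + 2*j)/(2*h)))"
    have dPsi: "(\<Psi> has_real_derivative h/(Q1 t^2+P1 t^2)) (at t)" for t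
    proof -
      have "(\<Psi> has_real_derivative (2*W t/(2*h)) / (1 + ((W t+2*j)/(2*h))^2)) (at t)"
        unfolding \<Psi>_def by (auto intro!: derivative_eq_intros dW simp: field_simps hne)
      moreover have "(2*W t/(2*h)) / (1 + ((W t+2*j)/(2*h))^2) = h/(Q1 t^2+P1 t^2)"
      proof -
        have "1 + ((W t+2*j)/(2*h))^2 = ((W t + 2*j)^2 + 4*h^2)/(4*h^2)"
          using hne by (simp add: field_simps power2_eq_square)
        also have "\<dots> = 4 * W t * (Q1 t^2 + P1 t^2) / (4*h^2)" using den[of t] by simp
        finally have e: "1 + ((W t+2*j)/(2*h))^2 = 4 * W t * (Q1 t^2 + P1 t^2) / (4*h^2)" .
        show ?thesis unfolding e using aux[OF hne Wpos[of t] denpos[of t]] .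
      qed
      ultimately show ?thesis by simp
    qed
    have "((\<lambda>t. h/(Q1 t^2+P1 t^2)) has_integral \<Psi> t1 - \<Psi> t0) {t0..t1}"
      apply (rule fundamental_theorem_of_calculus)
      using t01 apply simp
      using dPsi by (simp add: has_real_derivative_iff_has_vector_derivative[symmetric] has_field_derivative_at_within)
    then have int: "integral {t0..t1} (\<lambda>t. theta (\<gamma> t) (vector_derivative \<gamma> (at t))) = \<Psi> t1 - \<Psi> t0"
      by (simp add: integrand integral_unique)
    define S where "S = sqrt(r^2-l^2)"
    have S2: "S^2 = r^2 - l^2" using l by (simp add: S_def)
    have Spos: "S > 0" using l by (simp add: S_def power_strict_mono)
    have roots: "W t = 2*r + 2*S \<or> W t = 2*r - 2*S" if "sqnorm4 (\<gamma> t) = 2*r" for t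
    proof -
      have "W t + Z t = 4*r"
        using that ident1[of "Q1 t" "Q2 t" "P1 t" "P2 t"] by (simp add: sqnorm4_def gam W_def Z_def)
      then have "W t * W t + W t * Z t = 4*r*W t" by (metis distrib_left mult.commute)
      then have "(W t - (2*r + 2*S)) * (W t - (2*r - 2*S)) = 0"
        using WZ[of t] S2 by (simp add: algebra_simps power2_eq_square)
      then show ?thesis by simp
    qed
    have inc: "W t0 < W t1"
      using DERIV_pos_imp_increasing[OF t01, of W] dW Wpos
      by (metis mult_pos_pos zero_less_numeral)
    have "W t0 = 2*r - 2*S" "W t1 = 2*r + 2*S"
      using roots[OF s0] roots[OF s1] inc Spos by auto
    then show ?thesis using int hne by (simp add: \<Psi>_def S_def)
  qed
qed


lemma witness:
  assumes jh: "j^2+h^2 = l^2" and l: "0<l" "l<r"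
  shows "\<exists>\<gamma> t0 t1. XH_orbit \<gamma> \<and> (\<forall>t. F (\<gamma> t) = (j, h)) \<and> t0 < t1 \<and>
      sqnorm4 (\<gamma> t0) = 2 * r \<and> sqnorm4 (\<gamma> t1) = 2 * r \<and>
      (\<forall>t\<in>{t0<..<t1}. \<gamma> t \<in> ballB r)"
proof -
  define \<gamma> where "\<gamma> = (\<lambda>t. ((exp t + 2*j*exp(-t))/2, h*exp(-t), h*exp(-t), j*exp(-t) - exp t/2))"
  have orb: "XH_orbit \<gamma>"
    unfolding XH_orbit_def
  proof
    fix t :: real
    have e: "ham_vf H (\<gamma> t) = (exp t/2 - j*exp(-t), -h*exp(-t), -h*exp(-t), -((exp t + 2*j*exp(-t))/2))"
      by (simp add: \<gamma>_def ham_H)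
    have "(\<gamma> has_vector_derivative (exp t/2 - j*exp(-t), -h*exp(-t), -h*exp(-t), -((exp t + 2*j*exp(-t))/2))) (at t)"
      unfolding \<gamma>_def
      by (intro has_vector_derivative_Pair; 
          subst has_real_derivative_iff_has_vector_derivative[symmetric];
          auto intro!: derivative_eq_intros simp: field_simps)
    then show "(\<gamma> has_vector_derivative ham_vf H (\<gamma> t)) (at t)" using e by simp
  qed
  have Fc: "\<forall>t. F (\<gamma> t) = (j, h)"
  proof
    fix t :: real
    have m: "exp t * exp (-t) = 1" by (rule exp_minus_inverse)
    have "J (\<gamma> t) = j"
    proof -
      have "J (\<gamma> t) = j * (exp t * exp (-t))"
        by (simp add: J_def \<gamma>_def power2_eq_square field_simps)
      then show ?thesis using m by simp
    qed
    moreover have "H (\<gamma> t) = h"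
    proof -
      have "H (\<gamma> t) = h * (exp t * exp (-t))"
        by (simp add: H_def \<gamma>_def power2_eq_square field_simps)
      then show ?thesis using m by simp
    qed
    ultimately show "F (\<gamma> t) = (j, h)" by (simp add: F_def)
  qed
  have sq: "sqnorm4 (\<gamma> t) = (exp (2*t) + 4*l^2/exp (2*t))/2" for t
  proof -
    have m: "exp t * exp (-t) = 1" by (rule exp_minus_inverse)
    have e2: "exp (2*t) = exp t * exp t" by (metis exp_add mult_2)
    have "sqnorm4 (\<gamma> t) = (exp t)^2/2 + 2*(j^2+h^2)*(exp (-t))^2 + j*(exp t * exp (-t)) - j*(exp t * exp (-t))"
      by (simp add: sqnorm4_def \<gamma>_def power2_eq_square field_simps)
    also have "\<dots> = (exp (2*t) + 4*l^2/exp (2*t))/2"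
      unfolding e2 using jh by (simp add: exp_minus power2_eq_square field_simps)
    finally show ?thesis .
  qed
  define S where "S = sqrt(r^2-l^2)"
  have S2: "S^2 = r^2 - l^2" using l by (simp add: S_def)
  have Spos: "S > 0" using l by (simp add: S_def power_strict_mono)
  have Slt: "S < r"
  proof -
    have "S^2 < r^2" using S2 l by simp
    then show ?thesis using l Spos by (smt (verit) power_mono)
  qed
  define a where "a = 2*r + 2*S"
  define b where "b = 2*r - 2*S"
  have bpos: "b > 0" using Slt by (simp add: b_def)
  have ab: "a * b = 4*l^2" using S2 by (simp add: a_def b_def algebra_simps power2_eq_square)
  have ba: "b < a" using Spos by (simp add: a_def b_def)
  have apos: "a > 0" using ba bpos by simp
  define t0 where "t0 = ln b / 2"
  define t1 where "t1 = ln a / 2"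
  have E0: "exp (2*t0) = b" using bpos by (simp add: t0_def)
  have E1: "exp (2*t1) = a" using apos by (simp add: t1_def)
  have "t0 < t1" using ba bpos by (simp add: t0_def t1_def)
  moreover have "sqnorm4 (\<gamma> t0) = 2 * r"
  proof -
    have "4*l^2/b = a" using ab bpos by (simp add: field_simps)
    then show ?thesis using E0 sq[of t0] by (simp add: a_def b_def)
  qed
  moreover have "sqnorm4 (\<gamma> t1) = 2 * r"
  proof -
    have "4*l^2/a = b" using ab apos by (simp add: field_simps)
    then show ?thesis using E1 sq[of t1] by (simp add: a_def b_def)
  qed
  moreover have "\<forall>t\<in>{t0<..<t1}. \<gamma> t \<in> ballB r"
  proof
    fix t assume "t \<in> {t0<..<t1}"
    then have "exp (2*t0) < exp (2*t)" "exp (2*t) < exp (2*t1)" by auto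
    then have Eb: "b < exp (2*t)" "exp (2*t) < a" using E0 E1 by auto
    define E where "E = exp (2*t)"
    have Ep: "E > 0" by (simp add: E_def)
    have "(E - a) * (E - b) < 0" using Eb by (simp add: E_def mult_neg_pos)
    then have "E*E + a*b < (a+b)*E" by (simp add: algebra_simps)
    then have "E*E + 4*l^2 < 4*r*E" using ab by (simp add: a_def b_def algebra_simps)
    then have "E + 4*l^2/E < 4*r" using Ep by (simp add: field_simps)
    then show "\<gamma> t \<in> ballB r" using sq[of t] by (simp add: ballB_def E_def)
  qed
  ultimately show ?thesis using orb Fc by blast
qed

lemma Phi_val:
  assumes jh: "j^2+h^2 = l^2" and l: "0<l" "l<r"
  shows "Phi_rel r j h = (if h = 0 then 0 else arctan((2*r + 2 * sqrt(r^2-l^2) + 2*j)/(2*h)) - arctan((2*r - 2 * sqrt(r^2-l^2) + 2*j)/(2*h)))"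
proof -
  let ?P = "\<lambda>c. \<exists>\<gamma> t0 t1.
      XH_orbit \<gamma> \<and> (\<forall>t. F (\<gamma> t) = (j, h)) \<and> t0 < t1 \<and>
      sqnorm4 (\<gamma> t0) = 2 * r \<and> sqnorm4 (\<gamma> t1) = 2 * r \<and>
      (\<forall>t\<in>{t0<..<t1}. \<gamma> t \<in> ballB r) \<and>
      c = integral {t0..t1} (\<lambda>t. theta (\<gamma> t) (vector_derivative \<gamma> (at t)))"
  have "\<exists>c. ?P c" using witness[OF assms] by blast
  then have "?P (SOME c. ?P c)" by (rule someI_ex)
  then obtain \<gamma> t0 t1 where "XH_orbit \<gamma>" "\<forall>t. F (\<gamma> t) = (j, h)" "t0 < t1"
      "sqnorm4 (\<gamma> t0) = 2 * r" "sqnorm4 (\<gamma> t1) = 2 * r"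
      and c: "(SOME c. ?P c) = integral {t0..t1} (\<lambda>t. theta (\<gamma> t) (vector_derivative \<gamma> (at t)))"
    by blast
  then show ?thesis using integral_val[of \<gamma> j h t0 t1 r l] assms
    unfolding Phi_rel_def by simp
qed


lemma arctan_div: assumes "y \<noteq> 0" "u \<noteq> 0" shows "arctan (u/y) = sgn y * sgn u * pi/2 - arctan (y/u)"
proof -
  have e: "arctan (1/(y/u)) = sgn (y/u) * pi/2 - arctan (y/u)"
  proof -
    have "y/u \<noteq> 0" using assms by simp
    then show ?thesis by (rule Transcendental.arctan_inverse)
  qed
  have s: "sgn (y/u) = sgn y * sgn u"
    using assms by (cases y "0::real" rule: linorder_cases; cases u "0::real" rule: linorder_cases)
      (auto simp: zero_less_divide_iff divide_less_0_iff)
  show ?thesis using e s by simp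
qed

lemma sin_zero_cases: "0 \<le> p \<Longrightarrow> p < 2*pi \<Longrightarrow> sin p = 0 \<Longrightarrow> p = 0 \<or> p = pi"
proof -
  assume h: "0 \<le> p" "p < 2*pi" "sin p = 0"
  show ?thesis
  proof (rule ccontr)
    assume "\<not> (p = 0 \<or> p = pi)"
    then consider "0 < p \<and> p < pi" | "pi < p \<and> p < 2*pi" using h by linarith
    then show False
    proof cases
      case 1 then show ?thesis using sin_gt_zero[of p] h by simp
    next
      case 2 then have "0 < sin (p - pi)" using sin_gt_zero[of "p - pi"] by simp
      then show ?thesis using h by simp
    qed
  qed
qed

lemma analysis:
  fixes a b l :: real
  assumes l: "l > 0" and a: "a > 2*l" and b: "0 < b" "b < 2*l"
  defines "g \<equiv> (\<lambda>s. if sin s = 0 then 0 else arctan((a + 2*(l*cos s))/(2*(l* sin s))) - arctan((b + 2*(l*cos s))/(2*(l* sin s))))"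
  shows "jump_points g = {pi}" "((\<lambda>e. g (pi+e) - g (pi-e)) \<longlongrightarrow> -2*pi) (at_right 0)"
proof -
  define G0 where "G0 = (\<lambda>s. arctan (2*(l* sin s)/(b + 2*(l*cos s))) - arctan (2*(l* sin s)/(a + 2*(l*cos s))))"
  have apos: "a + 2*(l*cos s) > 0" for s
  proof -
    have "-1 \<le> cos s" by simp
    then have "-l \<le> l * cos s" using l by (metis mult.commute mult_minus1_right mult_left_mono less_imp_le)
    then show ?thesis using a by linarith
  qed
  have claimA: "g s = G0 s" if "b + 2*(l*cos s) > 0" for s
  proof (cases "sin s = 0")
    case True then show ?thesis by (simp add: g_def G0_def)
  next
    case False
    have y: "2*(l* sin s) \<noteq> 0" using False l by simp
    show ?thesis using False arctan_div[OF y, of "a + 2*(l*cos s)"] arctan_div[OF y, of "b + 2*(l*cos s)"]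
        apos[of s] that by (simp add: g_def G0_def)
  qed
  have claimB: "g s = sgn (sin s) * pi + G0 s" if "b + 2*(l*cos s) < 0" for s
  proof (cases "sin s = 0")
    case True then show ?thesis by (simp add: g_def G0_def)
  next
    case False
    have y: "2*(l* sin s) \<noteq> 0" using False l by simp
    have sy: "sgn (2*(l* sin s)) = sgn (sin s)" using l by (simp add: sgn_mult)
    show ?thesis using False arctan_div[OF y, of "a + 2*(l*cos s)"] arctan_div[OF y, of "b + 2*(l*cos s)"]
        apos[of s] that sy by (simp add: g_def G0_def)
  qed
  have G0c: "isCont G0 s" if "b + 2*(l*cos s) \<noteq> 0" for s
    unfolding G0_def using that apos[of s] by (auto intro!: continuous_intros simp del: )
  have ev1: "eventually (\<lambda>e. b + 2*(l*cos(pi+e)) < 0) (at_right 0)"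
  proof -
    have "((\<lambda>e. b + 2*(l*cos(pi+e))) \<longlongrightarrow> b - 2*l) (at_right 0)"
      by (auto intro!: tendsto_eq_intros)
    from order_tendstoD(2)[OF this, of 0] b show ?thesis by simp
  qed
  have ev2: "eventually (\<lambda>e. b + 2*(l*cos(pi-e)) < 0) (at_right 0)"
  proof -
    have "((\<lambda>e. b + 2*(l*cos(pi-e))) \<longlongrightarrow> b - 2*l) (at_right 0)"
      by (auto intro!: tendsto_eq_intros)
    from order_tendstoD(2)[OF this, of 0] b show ?thesis by simp
  qed
  have ev3: "eventually (\<lambda>e::real. 0 < e \<and> e < pi) (at_right 0)"
    unfolding eventually_at_right_field using pi_gt_zero by blast
  have eveq: "eventually (\<lambda>e. g (pi+e) - g (pi-e) = -2*pi + (G0 (pi+e) - G0 (pi-e))) (at_right 0)"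
    using ev1 ev2 ev3
  proof eventually_elim
    case (elim e)
    have "sin e > 0" using elim sin_gt_zero by auto
    then show ?case using claimB[OF elim(1)] claimB[OF elim(2)] by simp
  qed
  have G0pi: "G0 pi = 0" by (simp add: G0_def)
  have G0cpi: "isCont G0 pi" by (rule G0c) (use b in simp)
  have l1: "((\<lambda>e. G0 (pi+e)) \<longlongrightarrow> 0) (at_right 0)"
  proof -
    have "((\<lambda>e. pi+e) \<longlongrightarrow> pi) (at_right 0)" by (auto intro!: tendsto_eq_intros)
    from isCont_tendsto_compose[OF G0cpi this] G0pi show ?thesis by simp
  qed
  have l2: "((\<lambda>e. G0 (pi-e)) \<longlongrightarrow> 0) (at_right 0)"
  proof -
    have "((\<lambda>e. pi-e) \<longlongrightarrow> pi) (at_right 0)" by (auto intro!: tendsto_eq_intros)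
    from isCont_tendsto_compose[OF G0cpi this] G0pi show ?thesis by simp
  qed
  have "((\<lambda>e. -2*pi + (G0 (pi+e) - G0 (pi-e))) \<longlongrightarrow> -2*pi + (0 - 0)) (at_right 0)"
    by (intro tendsto_intros l1 l2)
  then show lim: "((\<lambda>e. g (pi+e) - g (pi-e)) \<longlongrightarrow> -2*pi) (at_right 0)"
    using tendsto_cong[OF eveq] by simp
  have notc: "\<not> isCont g pi"
  proof
    assume c: "isCont g pi"
    have g0: "g pi = 0" by (simp add: g_def)
    have "((\<lambda>e. g (pi+e)) \<longlongrightarrow> g pi) (at_right 0)"
      by (rule isCont_tendsto_compose[OF c]) (auto intro!: tendsto_eq_intros)
    moreover have "((\<lambda>e. g (pi-e)) \<longlongrightarrow> g pi) (at_right 0)"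
      by (rule isCont_tendsto_compose[OF c]) (auto intro!: tendsto_eq_intros)
    ultimately have "((\<lambda>e. g (pi+e) - g (pi-e)) \<longlongrightarrow> 0) (at_right 0)"
      using tendsto_diff by fastforce
    with lim have "-2*pi = (0::real)" using tendsto_unique[OF trivial_limit_at_right_real] by blast
    then show False by simp
  qed
  have contp: "isCont g p" if "sin p \<noteq> 0" for p
  proof -
    define gf where "gf = (\<lambda>s. arctan((a + 2*(l*cos s))/(2*(l* sin s))) - arctan((b + 2*(l*cos s))/(2*(l* sin s))))"
    have "isCont gf p" unfolding gf_def using that l by (auto intro!: continuous_intros)
    moreover have "eventually (\<lambda>s. sin s \<noteq> 0) (at p)"
      by (rule tendsto_imp_eventually_ne[of _ "sin p"]) (auto intro!: tendsto_intros that)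
    then have "eventually (\<lambda>s. gf s = g s) (at p)"
      by eventually_elim (simp add: g_def gf_def)
    moreover have "gf p = g p" using that by (simp add: g_def gf_def)
    ultimately show ?thesis unfolding isCont_def using tendsto_cong by metis
  qed
  have cont0: "isCont g 0"
  proof -
    have "isCont G0 0" by (rule G0c) (use b l in simp)
    moreover have "((\<lambda>s. b + 2*(l*cos s)) \<longlongrightarrow> b + 2*l) (at 0)"
      by (auto intro!: tendsto_eq_intros)
    from order_tendstoD(1)[OF this, of 0] b l have "eventually (\<lambda>s. b + 2*(l*cos s) > 0) (at 0)" by simp
    then have "eventually (\<lambda>s. G0 s = g s) (at 0)"
      by eventually_elim (simp add: claimA)
    moreover have "G0 0 = g 0" by (simp add: g_def G0_def)
    ultimately show ?thesis unfolding isCont_def using tendsto_cong by metis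
  qed
  show "jump_points g = {pi}"
  proof
    show "{pi} \<subseteq> jump_points g" using notc by (simp add: jump_points_def)
    show "jump_points g \<subseteq> {pi}"
    proof
      fix p assume "p \<in> jump_points g"
      then have p: "0 \<le> p" "p < 2*pi" "\<not> isCont g p" by (auto simp: jump_points_def)
      then have "sin p = 0" using contp by blast
      then have "p = 0 \<or> p = pi" using sin_zero_cases p by blast
      then show "p \<in> {pi}" using cont0 p by auto
    qed
  qed
qed


theorem mainTheorem13:
  fixes r :: real
  assumes "r > 0"
  shows "\<exists>l0>0. \<forall>l. 0 < l \<and> l < l0 \<longrightarrow>
           (let g = (\<lambda>s. case Gamma l s of (j, h) \<Rightarrow> Phi_rel r j h) in
              finite (jump_points g) \<and>
              (\<forall>p\<in>jump_points g. (\<exists>d. ((\<lambda>e. g (p + e) - g (p - e)) \<longlongrightarrow> d) (at_right 0))) \<and>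
              var_loop g = 2 * pi)"
proof (intro exI[of _ r] conjI allI impI)
  show "r > 0" by fact
  fix l :: real assume l: "0 < l \<and> l < r"
  define S where "S = sqrt(r^2-l^2)"
  have S2: "S^2 = r^2 - l^2" using l by (simp add: S_def)
  have Spos: "S > 0" using l by (simp add: S_def power_strict_mono)
  have Slt: "S < r"
  proof -
    have "S^2 < r^2" using S2 l by simp
    then show ?thesis using l Spos by (smt (verit) power_mono)
  qed
  define a where "a = 2*r + 2*S"
  define b where "b = 2*r - 2*S"
  have ab: "a * b = 4*l^2" using S2 by (simp add: a_def b_def algebra_simps power2_eq_square)
  have a2l: "a > 2*l" using l Spos by (simp add: a_def)
  have bpos: "b > 0" using Slt by (simp add: b_def)
  have b2l: "b < 2*l"
  proof (rule ccontr)
    assume "\<not> b < 2*l"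
    then have "a * b \<ge> a * (2*l)" using a2l l by (intro mult_left_mono) auto
    moreover have "a * (2*l) > 2*l * (2*l)" using a2l l by (intro mult_strict_right_mono) auto
    ultimately have "a * b > 2*l * (2*l)" by linarith
    then show False using ab by (simp add: power2_eq_square)
  qed
  define g where "g = (\<lambda>s. case Gamma l s of (j, h) \<Rightarrow> Phi_rel r j h)"
  have geq: "g = (\<lambda>s. if sin s = 0 then 0 else arctan((a + 2*(l*cos s))/(2*(l * sin s))) - arctan((b + 2*(l*cos s))/(2*(l * sin s))))"
  proof
    fix s
    have sq: "(l*cos s)^2 + (l * sin s)^2 = l^2"
      by (simp add: power_mult_distrib flip: distrib_left)
    show "g s = (if sin s = 0 then 0 else arctan((a + 2*(l*cos s))/(2*(l * sin s))) - arctan((b + 2*(l*cos s))/(2*(l * sin s))))"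
      using Phi_val[OF sq] l by (simp add: g_def Gamma_def a_def b_def S_def)
  qed
  have jp: "jump_points g = {pi}" and lim: "((\<lambda>e. g (pi+e) - g (pi-e)) \<longlongrightarrow> -2*pi) (at_right 0)"
    using analysis[of l a b] l a2l bpos b2l unfolding geq by auto
  have "jump g pi = -2*pi"
    unfolding jump_def using lim by (rule tendsto_Lim[rotated]) simp
  then show "let g = (\<lambda>s. case Gamma l s of (j, h) \<Rightarrow> Phi_rel r j h) in
              finite (jump_points g) \<and>
              (\<forall>p\<in>jump_points g. (\<exists>d. ((\<lambda>e. g (p + e) - g (p - e)) \<longlongrightarrow> d) (at_right 0))) \<and>
              var_loop g = 2 * pi"
    unfolding g_def[symmetric] Let_def using jp lim by (auto simp: var_loop_def)
qed

end
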